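(* Let $n\ge1$ and $m\ge2$. The group $G_{n,m}$ generated by $s_0,\dots,s_m$ is a quotient of the affine Weyl group $\tilde C_m$.
   Context: The Yoke graph $Y_{n,m}$ has vertices the tuples $v=(v_0,\dots,v_{m+1})$ with $v_0,v_{m+1}\in\mathbb{Z}_n$, $v_1,\dots,v_m\in\{0,1\}$, $\sum v_i\equiv0\pmod n$ (bucket entries mod $n$). For $0\le i\le m$, $\overleftarrow{s}_i(v)$ replaces $v_i,v_{i+1}$ by $v_i+1,v_{i+1}-1$ and $\overrightarrow{s}_i(v)$ replaces them by $v_i-1,v_{i+1}+1$. Define permutations of the vertex set: $s_0(v)=\overleftarrow{s}_0(v)$ if $v_1=1$, $=\overrightarrow{s}_0(v)$ if $v_1=0$; $s_m(v)=\overleftarrow{s}_m(v)$ if $v_m=0$, $=\overrightarrow{s}_m(v)$ if $v_m=1$; for $1\le i\le m-1$, $s_i$ swaps entries $v_i,v_{i+1}$. $G_{n,m}$ is the subgroup of the symmetric group on the vertex set generated by $s_0,\dots,s_m$. The affine Weyl group $\tilde C_m$ is the group with generators $\sigma_0,\dots,\sigma_m$ and relations $\sigma_i^2=1$, $(\sigma_i\sigma_j)^2=1$ for $|i-j|>1$, $(\sigma_i\sigma_{i+1})^3=1$ for $1\le i\le m-2$, $(\sigma_0\sigma_1)^4=(\sigma_{m-1}\sigma_m)^4=1$. *)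

theory Defs
  imports "HOL-Algebra.Algebra"
begin

text \<open>Since every
generator is an involution, the group presented by the Coxeter relations is the
monoid of words modulo the congruence generated by declaring each relator equal
to the empty word.\<close>

definition Ct_relators :: "nat \<Rightarrow> nat list set" where
  "Ct_relators m =
     {[i, i] | i. i \<le> m}
   \<union> {concat (replicate 2 [i, j]) | i j. i \<le> m \<and> j \<le> m \<and> (i + 1 < j \<or> j + 1 < i)}
   \<union> {concat (replicate 3 [i, i + 1]) | i. 1 \<le> i \<and> i + 2 \<le> m}
   \<union> {concat (replicate 4 [0, 1])}
   \<union> {concat (replicate 4 [m - 1, m])}"

inductive Ct_eqv :: "nat \<Rightarrow> nat list \<Rightarrow> nat list \<Rightarrow> bool" for m where
  refl: "Ct_eqv m w w"
| sym: "Ct_eqv m u w \<Longrightarrow> Ct_eqv m w u"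
| trans: "Ct_eqv m u v \<Longrightarrow> Ct_eqv m v w \<Longrightarrow> Ct_eqv m u w"
| rel: "r \<in> Ct_relators m \<Longrightarrow> Ct_eqv m (u @ v) (u @ r @ v)"

definition Ct_rel :: "nat \<Rightarrow> (nat list \<times> nat list) set" where
  "Ct_rel m = {(u, w). u \<in> lists {..m} \<and> w \<in> lists {..m} \<and> Ct_eqv m u w}"

definition Ctilde :: "nat \<Rightarrow> nat list set monoid" where
  "Ctilde m = \<lparr> carrier = lists {..m} // Ct_rel m,
                monoid.mult = (\<lambda>A B. \<Union>a\<in>A. \<Union>b\<in>B. Ct_rel m `` {a @ b}),
                monoid.one = Ct_rel m `` {[]} \<rparr>"

definition Ct_gen :: "nat \<Rightarrow> nat \<Rightarrow> nat list set" where
  "Ct_gen m i = Ct_rel m `` {[i]}"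

text \<open>A vertex (v_0,...,v_{m+1}) is encoded as a function nat => int that vanishes
beyond index m+1; v_0 and v_{m+1} are represented by their residues in {0..<n}.\<close>

definition yoke_vertices :: "nat \<Rightarrow> nat \<Rightarrow> (nat \<Rightarrow> int) set" where
  "yoke_vertices n m = {v. v 0 \<in> {0..<int n} \<and> v (m + 1) \<in> {0..<int n}
       \<and> (\<forall>i\<in>{1..m}. v i \<in> {0, 1}) \<and> (\<forall>i>m + 1. v i = 0)
       \<and> (\<Sum>i\<le>m + 1. v i) mod int n = 0}"

definition sl :: "nat \<Rightarrow> nat \<Rightarrow> nat \<Rightarrow> (nat \<Rightarrow> int) \<Rightarrow> (nat \<Rightarrow> int)" where
  "sl n m i v = (let a = v i + 1; b = v (i + 1) - 1 in
     v(i := (if i = 0 then a mod int n else a),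
       i + 1 := (if i = m then b mod int n else b)))"

definition sr :: "nat \<Rightarrow> nat \<Rightarrow> nat \<Rightarrow> (nat \<Rightarrow> int) \<Rightarrow> (nat \<Rightarrow> int)" where
  "sr n m i v = (let a = v i - 1; b = v (i + 1) + 1 in
     v(i := (if i = 0 then a mod int n else a),
       i + 1 := (if i = m then b mod int n else b)))"

definition yoke_s :: "nat \<Rightarrow> nat \<Rightarrow> nat \<Rightarrow> (nat \<Rightarrow> int) \<Rightarrow> (nat \<Rightarrow> int)" where
  "yoke_s n m i v =
     (if i = 0 then (if v 1 = 1 then sl n m 0 v else sr n m 0 v)
      else if i = m then (if v m = 0 then sl n m m v else sr n m m v)
      else v(i := v (i + 1), i + 1 := v i))"

definition yoke_perm :: "nat \<Rightarrow> nat \<Rightarrow> nat \<Rightarrow> (nat \<Rightarrow> int) \<Rightarrow> (nat \<Rightarrow> int)" where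
  "yoke_perm n m i = restrict (yoke_s n m i) (yoke_vertices n m)"

definition Gnm :: "nat \<Rightarrow> nat \<Rightarrow> ((nat \<Rightarrow> int) \<Rightarrow> (nat \<Rightarrow> int)) monoid" where
  "Gnm n m = (BijGroup (yoke_vertices n m))
     \<lparr> carrier := generate (BijGroup (yoke_vertices n m)) (yoke_perm n m ` {..m}) \<rparr>"

end

theory Submission
  imports Defs
begin


lemma sum_upd: "finite A \<Longrightarrow> i \<in> A \<Longrightarrow> sum (f(i:=a)) A = sum f A - f i + (a::int)"
  by (simp add: sum.remove[of A i] sum.cong[of "A - {i}" "A - {i}" "f(i:=a)" f])

lemma vert_upd:
  assumes v: "v \<in> yoke_vertices n m" and i: "i \<le> m"
    and ra: "if i = 0 then a \<in> {0..<int n} else a \<in> {0,1}"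
    and rc: "if i = m then c \<in> {0..<int n} else c \<in> {0,1}"
    and md: "(a + c) mod int n = (v i + v (i+1)) mod int n"
  shows "v(i:=a, i+1:=c) \<in> yoke_vertices n m"
proof -
  have 1: "sum (v(i:=a, i+1:=c)) {..m+1} = sum (v(i:=a)) {..m+1} - (v(i:=a)) (i+1) + c"
    by (rule sum_upd) (use i in auto)
  have 2: "sum (v(i:=a)) {..m+1} = sum v {..m+1} - v i + a"
    by (rule sum_upd) (use i in auto)
  have S: "(\<Sum>k\<le>m + 1. v k) mod int n = 0" using v by (simp add: yoke_vertices_def)
  have "sum (v(i:=a, i+1:=c)) {..m+1} = sum v {..m+1} + ((a + c) - (v i + v (i+1)))"
    using 1 2 by simp
  hence "sum (v(i:=a, i+1:=c)) {..m+1} mod int n = 0"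
    using S md by (metis add.right_neutral mod_add_cong mod_add_eq mod_diff_eq diff_self mod_0)
  moreover have "\<forall>k\<in>{1..m}. (v(i:=a, i+1:=c)) k \<in> {0, 1}"
    using v ra rc i by (auto simp: yoke_vertices_def split: if_splits)
  moreover have "\<forall>k>m + 1. (v(i:=a, i+1:=c)) k = 0"
    using v i by (auto simp: yoke_vertices_def)
  moreover have "(v(i:=a, i+1:=c)) 0 \<in> {0..<int n}" "(v(i:=a, i+1:=c)) (m+1) \<in> {0..<int n}"
    using v ra rc i by (auto simp: yoke_vertices_def split: if_splits)
  ultimately show ?thesis unfolding yoke_vertices_def by blast
qed

lemma yoke_s_closed:
  assumes n: "n \<ge> 1" and m: "m \<ge> 2" and i: "i \<le> m" and v: "v \<in> yoke_vertices n m"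
  shows "yoke_s n m i v \<in> yoke_vertices n m"
proof -
  have b: "\<forall>k\<in>{1..m}. v k \<in> {0, 1}" "v 0 \<in> {0..<int n}" "v (m + 1) \<in> {0..<int n}"
    using v by (auto simp: yoke_vertices_def)
  have n0: "int n > 0" using n by simp
  consider "i = 0" | "i = m" | "0 < i" "i < m" using i by linarith
  then show ?thesis
  proof cases
    case 1
    have v1: "v 1 \<in> {0,1}" using b m by auto
    show ?thesis
    proof (cases "v 1 = 1")
      case True
      have "yoke_s n m i v = v(0 := (v 0 + 1) mod int n, 0+1 := 0)"
        using 1 True m by (simp add: yoke_s_def sl_def Let_def)
      moreover have "v(0 := (v 0 + 1) mod int n, 0+1 := 0) \<in> yoke_vertices n m"
        by (rule vert_upd[OF v]) (use m n0 True in \<open>auto simp: mod_simps\<close>)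
      ultimately show ?thesis by simp
    next
      case False
      hence F: "v 1 = 0" using v1 by auto
      have "yoke_s n m i v = v(0 := (v 0 - 1) mod int n, 0+1 := 1)"
        using 1 F m by (simp add: yoke_s_def sr_def Let_def)
      moreover have "v(0 := (v 0 - 1) mod int n, 0+1 := 1) \<in> yoke_vertices n m"
        by (rule vert_upd[OF v]) (use m n0 F in \<open>auto simp: mod_simps ac_simps\<close>)
      ultimately show ?thesis by simp
    qed
  next
    case 2
    have vm: "v m \<in> {0,1}" using b m by auto
    show ?thesis
    proof (cases "v m = 0")
      case True
      have "yoke_s n m i v = v(m := 1, m+1 := (v (m+1) - 1) mod int n)"
        using 2 True m by (simp add: yoke_s_def sl_def Let_def)
      moreover have "v(m := 1, m+1 := (v (m+1) - 1) mod int n) \<in> yoke_vertices n m"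
        by (rule vert_upd[OF v]) (use m n0 True in \<open>auto simp: mod_simps\<close>)
      ultimately show ?thesis by simp
    next
      case False
      hence F: "v m = 1" using vm by auto
      have "yoke_s n m i v = v(m := 0, m+1 := (v (m+1) + 1) mod int n)"
        using 2 F m by (simp add: yoke_s_def sr_def Let_def)
      moreover have "v(m := 0, m+1 := (v (m+1) + 1) mod int n) \<in> yoke_vertices n m"
        by (rule vert_upd[OF v]) (use m n0 F in \<open>auto simp: mod_simps ac_simps\<close>)
      ultimately show ?thesis by simp
    qed
  next
    case 3
    have "yoke_s n m i v = v(i := v (i+1), i+1 := v i)"
      using 3 by (simp add: yoke_s_def)
    moreover have "v(i := v (i+1), i+1 := v i) \<in> yoke_vertices n m"
      by (rule vert_upd[OF v]) (use 3 b in \<open>auto simp: add.commute\<close>)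
    ultimately show ?thesis by simp
  qed
qed




lemma vfacts:
  assumes "v \<in> yoke_vertices n m" 
  shows "\<And>k. 1 \<le> k \<Longrightarrow> k \<le> m \<Longrightarrow> v k = 0 \<or> v k = 1" "0 \<le> v 0" "v 0 < int n" "0 \<le> v (m+1)" "v (m+1) < int n"
  using assms by (auto simp: yoke_vertices_def)

lemma R1:
  assumes n: "n \<ge> 1" and m: "m \<ge> 2" and i: "i \<le> m" and v: "v \<in> yoke_vertices n m"
  shows "yoke_s n m i (yoke_s n m i v) = v"
proof -
  note f = vfacts[OF v]
  consider "i = 0" | "i = m" | "0 < i" "i < m" using i by linarith
  then show ?thesis
  proof cases
    case 1
    then show ?thesis using f(1)[of 1] f(2,3) m
      by (auto simp: yoke_s_def sl_def sr_def Let_def fun_eq_iff mod_simps)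
  next
    case 2
    then show ?thesis using f(1)[of m] f(4,5) m
      by (auto simp: yoke_s_def sl_def sr_def Let_def fun_eq_iff mod_simps)
  next
    case 3
    then show ?thesis by (auto simp: yoke_s_def fun_eq_iff)
  qed
qed



lemma Rcomm:
  assumes n: "n \<ge> 1" and m: "m \<ge> 2" and i: "i \<le> m" and j: "j \<le> m" and ij: "i + 1 < j"
    and v: "v \<in> yoke_vertices n m"
  shows "yoke_s n m i (yoke_s n m j v) = yoke_s n m j (yoke_s n m i v)"
proof -
  note f = vfacts[OF v]
  consider "i = 0" "j = m" | "i = 0" "j < m" | "0 < i" "j = m" | "0 < i" "j < m" using i j by linarith
  then show ?thesis
  proof cases
    case 1
    then show ?thesis using f(1)[of 1] f(1)[of m] f(2-5) m ij
      by (auto simp: yoke_s_def sl_def sr_def Let_def fun_eq_iff mod_simps)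
  next
    case 2
    then show ?thesis using f(1)[of 1] f(2-5) m ij
      by (auto simp: yoke_s_def sl_def sr_def Let_def fun_eq_iff mod_simps)
  next
    case 3
    then show ?thesis using f(1)[of m] f(2-5) m ij
      by (auto simp: yoke_s_def sl_def sr_def Let_def fun_eq_iff mod_simps)
  next
    case 4
    then show ?thesis using ij by (auto simp: yoke_s_def fun_eq_iff)
  qed
qed

lemma R3:
  assumes i1: "1 \<le> i" and im: "i + 2 \<le> m"
  shows "yoke_s n m i (yoke_s n m (i+1) (yoke_s n m i (yoke_s n m (i+1) (yoke_s n m i (yoke_s n m (i+1) v))))) = v"
  using assms by (auto simp: yoke_s_def fun_eq_iff)




lemma s_mid: "0 < i \<Longrightarrow> i < m \<Longrightarrow> yoke_s n m i v = v(i := v (i+1), i+1 := v i)"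
  by (simp add: yoke_s_def)
lemma s_01: "m \<ge> 2 \<Longrightarrow> v (Suc 0) = 1 \<Longrightarrow> yoke_s n m 0 v = v(0 := (v 0 + 1) mod int n, Suc 0 := 0)"
  by (simp add: yoke_s_def sl_def Let_def)
lemma s_00: "m \<ge> 2 \<Longrightarrow> v (Suc 0) \<noteq> 1 \<Longrightarrow> yoke_s n m 0 v = v(0 := (v 0 - 1) mod int n, Suc 0 := v (Suc 0) + 1)"
  by (simp add: yoke_s_def sr_def Let_def)
lemma s_m0: "m \<ge> 2 \<Longrightarrow> v m = 0 \<Longrightarrow> yoke_s n m m v = v(m := 1, m+1 := (v (m+1) - 1) mod int n)"
  by (simp add: yoke_s_def sl_def Let_def)
lemma s_m1: "m \<ge> 2 \<Longrightarrow> v m \<noteq> 0 \<Longrightarrow> yoke_s n m m v = v(m := v m - 1, m+1 := (v (m+1) + 1) mod int n)"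
  by (simp add: yoke_s_def sr_def Let_def)

lemma R4:
  assumes n: "n \<ge> 1" and m: "m \<ge> 2" and v: "v \<in> yoke_vertices n m"
  shows "yoke_s n m 0 (yoke_s n m 1 (yoke_s n m 0 (yoke_s n m 1 (yoke_s n m 0 (yoke_s n m 1 (yoke_s n m 0 (yoke_s n m 1 v))))))) = v"
proof -
  note f = vfacts[OF v]
  have s1: "yoke_s n m (Suc 0) w = w(Suc 0 := w (Suc (Suc 0)), Suc (Suc 0) := w (Suc 0))" for w using s_mid[of 1 m n w] m by (simp add: numeral_2_eq_2)
  have a: "v (Suc 0) = 0 \<or> v (Suc 0) = 1" and b: "v (Suc (Suc 0)) = 0 \<or> v (Suc (Suc 0)) = 1" using f(1)[of 1] f(1)[of 2] m by (auto simp: numeral_2_eq_2)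
  have r: "v 0 mod int n = v 0" using f(2,3) by auto
  show ?thesis
    using a b
    apply (elim disjE)
    apply (simp_all add: s1 s_01 s_00 m)
    apply (simp_all add: fun_eq_iff mod_simps r)
    done
qed
lemma R5:
  assumes n: "n \<ge> 1" and m: "m \<ge> 2" and v: "v \<in> yoke_vertices n m"
  shows "yoke_s n m (m-1) (yoke_s n m m (yoke_s n m (m-1) (yoke_s n m m (yoke_s n m (m-1) (yoke_s n m m (yoke_s n m (m-1) (yoke_s n m m v))))))) = v"
proof -
  note f = vfacts[OF v]
  obtain k where k: "m = Suc k" "k \<ge> 1" using m by (cases m) auto
  have sk: "yoke_s n (Suc k) k w = w(k := w (Suc k), Suc k := w k)" for w using s_mid[of k m n w] k by simp
  have s0: "w (Suc k) = 0 \<Longrightarrow> yoke_s n (Suc k) (Suc k) w = w(Suc k := 1, Suc (Suc k) := (w (Suc (Suc k)) - 1) mod int n)" for w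
    using s_m0[of m w n] k m by simp
  have s1: "w (Suc k) \<noteq> 0 \<Longrightarrow> yoke_s n (Suc k) (Suc k) w = w(Suc k := w (Suc k) - 1, Suc (Suc k) := (w (Suc (Suc k)) + 1) mod int n)" for w
    using s_m1[of m w n] k m by simp
  have a: "v k = 0 \<or> v k = 1" and b: "v (Suc k) = 0 \<or> v (Suc k) = 1" using f(1)[of "k"] f(1)[of m] k by auto
  have r: "v (Suc (Suc k)) mod int n = v (Suc (Suc k))" using f(4,5) k by auto
  show ?thesis
    unfolding k diff_Suc_1
    using a b
    apply (elim disjE)
    apply (simp_all add: sk s0 s1)
    apply (simp_all add: fun_eq_iff mod_simps r)
    done
qed



definition gen :: "nat \<Rightarrow> nat \<Rightarrow> nat \<Rightarrow> (nat \<Rightarrow> int) \<Rightarrow> (nat \<Rightarrow> int)" where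
  "gen n m i = (if i \<le> m then yoke_perm n m i else \<one>\<^bsub>BijGroup (yoke_vertices n m)\<^esub>)"

definition ev :: "nat \<Rightarrow> nat \<Rightarrow> nat list \<Rightarrow> (nat \<Rightarrow> int) \<Rightarrow> (nat \<Rightarrow> int)" where
  "ev n m w = foldr (\<lambda>i acc. gen n m i \<otimes>\<^bsub>BijGroup (yoke_vertices n m)\<^esub> acc) w \<one>\<^bsub>BijGroup (yoke_vertices n m)\<^esub>"

definition sfun :: "nat \<Rightarrow> nat \<Rightarrow> nat \<Rightarrow> (nat \<Rightarrow> int) \<Rightarrow> (nat \<Rightarrow> int)" where
  "sfun n m i = (if i \<le> m then yoke_s n m i else id)"

context
  fixes n m :: nat
  assumes n: "n \<ge> 1" and m: "m \<ge> 2"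
begin

abbreviation "V \<equiv> yoke_vertices n m"
abbreviation "G \<equiv> BijGroup V"

interpretation grp: group G by (rule group_BijGroup)

lemma yoke_perm_Bij: "i \<le> m \<Longrightarrow> yoke_perm n m i \<in> carrier G"
proof -
  assume i: "i \<le> m"
  have "bij_betw (yoke_perm n m i) V V"
    by (rule bij_betw_byWitness[where f' = "yoke_perm n m i"])
       (auto simp: yoke_perm_def yoke_s_closed[OF n m i] R1[OF n m i])
  then show ?thesis by (simp add: BijGroup_def Bij_def yoke_perm_def)
qed

lemma gen_carrier: "gen n m i \<in> carrier G"
  by (simp add: gen_def yoke_perm_Bij)

lemma ev_carrier: "ev n m w \<in> carrier G"
  by (induction w) (simp_all add: ev_def gen_carrier)

lemma ev_Cons: "ev n m (i # w) = gen n m i \<otimes>\<^bsub>G\<^esub> ev n m w"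
  by (simp add: ev_def)

lemma ev_append: "ev n m (u @ w) = ev n m u \<otimes>\<^bsub>G\<^esub> ev n m w"
  by (induction u) (simp_all add: ev_Cons ev_carrier gen_carrier grp.m_assoc, simp add: ev_def)

lemma sfun_closed: "v \<in> V \<Longrightarrow> sfun n m i v \<in> V"
  by (simp add: sfun_def yoke_s_closed[OF n m])

lemma G_mult_apply: "f \<in> carrier G \<Longrightarrow> g \<in> carrier G \<Longrightarrow> v \<in> V \<Longrightarrow> (f \<otimes>\<^bsub>G\<^esub> g) v = f (g v)"
  by (simp add: BijGroup_def compose_def)

lemma G_carrier_maps: "f \<in> carrier G \<Longrightarrow> v \<in> V \<Longrightarrow> f v \<in> V"
  by (auto simp: BijGroup_def Bij_def bij_betw_def)

lemma gen_apply: "v \<in> V \<Longrightarrow> gen n m i v = sfun n m i v"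
  by (simp add: gen_def sfun_def yoke_perm_def BijGroup_def)

lemma ev_apply: "v \<in> V \<Longrightarrow> ev n m w v = foldr (\<lambda>i f. sfun n m i \<circ> f) w id v"
proof (induction w arbitrary: v)
  case Nil
  then show ?case by (simp add: ev_def BijGroup_def)
next
  case (Cons i w)
  have "ev n m w v \<in> V" using ev_carrier[of w] Cons.prems by (rule G_carrier_maps)
  then show ?case using Cons
    by (simp add: ev_Cons G_mult_apply gen_carrier ev_carrier gen_apply)
qed

lemma ev_one: "ev n m [] = \<one>\<^bsub>G\<^esub>" by (simp add: ev_def)

lemma ev_eq_one:
  assumes "\<And>v. v \<in> V \<Longrightarrow> foldr (\<lambda>i f. sfun n m i \<circ> f) w id v = v"
  shows "ev n m w = \<one>\<^bsub>G\<^esub>"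
proof (rule extensionalityI[where A = V])
  show "ev n m w \<in> extensional V" using ev_carrier[of w] by (simp add: BijGroup_def Bij_def)
  show "\<one>\<^bsub>G\<^esub> \<in> extensional V" by (simp add: BijGroup_def)
  fix v assume "v \<in> V"
  then show "ev n m w v = \<one>\<^bsub>G\<^esub> v" using assms ev_apply by (simp add: BijGroup_def)
qed

lemma ev_rel: "r \<in> Ct_relators m \<Longrightarrow> ev n m r = \<one>\<^bsub>G\<^esub>"
proof -
  assume r: "r \<in> Ct_relators m"
  have c2: "concat (replicate 2 xs) = xs @ xs" for xs :: "nat list" by (simp add: numeral_2_eq_2)
  have c3: "concat (replicate 3 xs) = xs @ xs @ xs" for xs :: "nat list" by (simp add: numeral_3_eq_3)
  have c4: "concat (replicate 4 xs) = xs @ xs @ xs @ xs" for xs :: "nat list"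
    by (simp add: numeral_Bit0 numeral_2_eq_2)
  from r show ?thesis unfolding Ct_relators_def
  proof (elim UnE)
    assume "r \<in> {[i, i] |i. i \<le> m}"
    then obtain i where r: "r = [i,i]" "i \<le> m" by auto
    show ?thesis using r by (intro ev_eq_one) (simp add: sfun_def R1[OF n m])
  next
    assume "r \<in> {concat (replicate 2 [i, j]) |i j. i \<le> m \<and> j \<le> m \<and> (i + 1 < j \<or> j + 1 < i)}"
    then obtain i j where r: "r = [i,j,i,j]" "i \<le> m" "j \<le> m" "i + 1 < j \<or> j + 1 < i"
      by (auto simp: c2)
    show ?thesis
    proof (rule ev_eq_one)
      fix v assume v: "v \<in> V"
      have "yoke_s n m i (yoke_s n m j (yoke_s n m i (yoke_s n m j v))) = v"
      proof (cases "i + 1 < j")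
        case True
        then show ?thesis using r v
          by (simp add: Rcomm[OF n m, of i j] yoke_s_closed[OF n m] R1[OF n m])
      next
        case False
        hence "j + 1 < i" using r by auto
        then show ?thesis using r v
          by (simp add: Rcomm[OF n m, of j i, symmetric] yoke_s_closed[OF n m] R1[OF n m])
      qed
      then show "foldr (\<lambda>i f. sfun n m i \<circ> f) r id v = v" using r by (simp add: sfun_def)
    qed
  next
    assume "r \<in> {concat (replicate 3 [i, i + 1]) |i. 1 \<le> i \<and> i + 2 \<le> m}"
    then obtain i where r: "r = [i,i+1,i,i+1,i,i+1]" "1 \<le> i" "i + 2 \<le> m"
      by (auto simp: c3)
    show ?thesis using r R3[of i m n] by (intro ev_eq_one) (simp add: sfun_def)
  next
    assume "r \<in> {concat (replicate 4 [0, 1])}"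
    then have r: "r = [0,1,0,1,0,1,0,1]" by (simp add: c4)
    show ?thesis using r m R4[OF n m] by (intro ev_eq_one) (simp add: sfun_def)
  next
    assume "r \<in> {concat (replicate 4 [m - 1, m])}"
    then have r: "r = [m-1,m,m-1,m,m-1,m,m-1,m]" by (simp add: c4)
    show ?thesis using r m R5[OF n m] by (intro ev_eq_one) (simp add: sfun_def)
  qed
qed

lemma ev_eqv: "Ct_eqv m u w \<Longrightarrow> ev n m u = ev n m w"
proof (induction rule: Ct_eqv.induct)
  case (rel r u v)
  then show ?case by (simp add: ev_append ev_rel ev_carrier grp.l_one)
qed auto

end



context
  fixes n m :: nat
  assumes n: "n \<ge> 1" and m: "m \<ge> 2"
begin

abbreviation "V' \<equiv> yoke_vertices n m"
abbreviation "G' \<equiv> BijGroup V'"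

interpretation grp: group G' by (rule group_BijGroup)

lemma ev_gen: "w \<in> lists {..m} \<Longrightarrow> ev n m w \<in> generate G' (yoke_perm n m ` {..m})"
proof (induction w)
  case Nil
  then show ?case by (simp add: ev_one[OF n m] generate.one)
next
  case (Cons i w)
  then have "gen n m i \<in> generate G' (yoke_perm n m ` {..m})"
    by (auto simp: gen_def intro: generate.incl)
  then show ?case using Cons by (simp add: ev_Cons[OF n m] generate.eng)
qed

lemma gen_ev: "g \<in> generate G' (yoke_perm n m ` {..m}) \<Longrightarrow> \<exists>w\<in>lists {..m}. g = ev n m w"
proof (induction rule: generate.induct)
  case one
  then show ?case by (intro bexI[of _ "[]"]) (simp_all add: ev_one[OF n m])
next
  case (incl h)
  then obtain i where i: "i \<le> m" "h = yoke_perm n m i" by auto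
  have "ev n m [i] = h" using i
    by (simp add: ev_Cons[OF n m] ev_one[OF n m] gen_def yoke_perm_Bij[OF n m])
  then show ?case using i by (intro bexI[of _ "[i]"]) auto
next
  case (inv h)
  then obtain i where i: "i \<le> m" "h = yoke_perm n m i" by auto
  have e1: "ev n m [i] = h" using i
    by (simp add: ev_Cons[OF n m] ev_one[OF n m] gen_def yoke_perm_Bij[OF n m])
  have "[i,i] \<in> Ct_relators m" using i by (simp add: Ct_relators_def)
  hence "ev n m [i,i] = \<one>\<^bsub>G'\<^esub>" by (rule ev_rel[OF n m])
  hence "h \<otimes>\<^bsub>G'\<^esub> h = \<one>\<^bsub>G'\<^esub>" using i
    by (simp add: ev_Cons[OF n m] ev_one[OF n m] gen_def yoke_perm_Bij[OF n m])
  hence "inv\<^bsub>G'\<^esub> h = h" using i yoke_perm_Bij[OF n m] by (simp add: grp.inv_equality)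
  then show ?case using i e1 by (intro bexI[of _ "[i]"]) auto
next
  case (eng h1 h2)
  then obtain w1 w2 where "w1 \<in> lists {..m}" "h1 = ev n m w1" "w2 \<in> lists {..m}" "h2 = ev n m w2" by blast
  then show ?case by (intro bexI[of _ "w1 @ w2"]) (simp_all add: ev_append[OF n m])
qed

definition hh :: "nat list set \<Rightarrow> (nat \<Rightarrow> int) \<Rightarrow> (nat \<Rightarrow> int)" where
  "hh A = ev n m (SOME w. w \<in> A)"

lemma carrier_Ct: "carrier (Ctilde m) = {Ct_rel m `` {a} | a. a \<in> lists {..m}}"
  by (auto simp: Ctilde_def quotient_def)

lemma class_ev: "a \<in> lists {..m} \<Longrightarrow> x \<in> Ct_rel m `` {a} \<Longrightarrow> ev n m x = ev n m a"
proof -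
  assume "x \<in> Ct_rel m `` {a}"
  then have "Ct_eqv m a x" by (simp add: Ct_rel_def)
  then show ?thesis by (simp add: ev_eqv[OF n m])
qed

lemma self_class: assumes "a \<in> lists {..m}" shows "a \<in> Ct_rel m `` {a}"
proof -
  have "(a,a) \<in> Ct_rel m" using assms unfolding Ct_rel_def by (blast intro: Ct_eqv.refl)
  thus ?thesis by simp
qed

lemma hh_class: assumes a: "a \<in> lists {..m}" shows "hh (Ct_rel m `` {a}) = ev n m a"
proof -
  have "(SOME w. w \<in> Ct_rel m `` {a}) \<in> Ct_rel m `` {a}" by (rule someI[of _ a]) (rule self_class[OF a])
  then show ?thesis unfolding hh_def by (rule class_ev[OF a])
qed

lemma hh_in: "A \<in> carrier (Ctilde m) \<Longrightarrow> hh A \<in> generate G' (yoke_perm n m ` {..m})"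
proof -
  assume "A \<in> carrier (Ctilde m)"
  then obtain a where a: "a \<in> lists {..m}" "A = Ct_rel m `` {a}" by (auto simp: carrier_Ct)
  then show ?thesis using hh_class[OF a(1)] ev_gen[OF a(1)] by simp
qed

lemma main: "hh \<in> hom (Ctilde m) (Gnm n m)
           \<and> hh ` carrier (Ctilde m) = carrier (Gnm n m)
           \<and> (\<forall>i\<le>m. hh (Ct_gen m i) = yoke_perm n m i)"
proof (intro conjI)
  have cG: "carrier (Gnm n m) = generate G' (yoke_perm n m ` {..m})" by (simp add: Gnm_def)
  have mG: "x \<otimes>\<^bsub>Gnm n m\<^esub> y = x \<otimes>\<^bsub>G'\<^esub> y" for x y by (simp add: Gnm_def)
  show "hh ` carrier (Ctilde m) = carrier (Gnm n m)"
  proof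
    show "hh ` carrier (Ctilde m) \<subseteq> carrier (Gnm n m)"
      using hh_in cG by auto
    show "carrier (Gnm n m) \<subseteq> hh ` carrier (Ctilde m)"
    proof
      fix g assume "g \<in> carrier (Gnm n m)"
      then obtain w where w: "w \<in> lists {..m}" "g = ev n m w" using gen_ev cG by auto
      have "Ct_rel m `` {w} \<in> carrier (Ctilde m)" using w(1) by (auto simp: carrier_Ct)
      moreover have "g = hh (Ct_rel m `` {w})" using hh_class[OF w(1)] w(2) by simp
      ultimately show "g \<in> hh ` carrier (Ctilde m)" by blast
    qed
  qed
  show "\<forall>i\<le>m. hh (Ct_gen m i) = yoke_perm n m i"
  proof (intro allI impI)
    fix i assume i: "i \<le> m"
    then show "hh (Ct_gen m i) = yoke_perm n m i" unfolding Ct_gen_def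
      by (subst hh_class) (simp_all add: ev_Cons[OF n m] ev_one[OF n m] gen_def yoke_perm_Bij[OF n m])
  qed
  show "hh \<in> hom (Ctilde m) (Gnm n m)"
  proof (rule homI)
    fix A assume "A \<in> carrier (Ctilde m)"
    then show "hh A \<in> carrier (Gnm n m)" using hh_in cG by auto
  next
    fix A B assume A: "A \<in> carrier (Ctilde m)" and B: "B \<in> carrier (Ctilde m)"
    then obtain a b where a: "a \<in> lists {..m}" "A = Ct_rel m `` {a}"
      and b: "b \<in> lists {..m}" "B = Ct_rel m `` {b}" by (auto simp: carrier_Ct)
    define XX where "XX = A \<otimes>\<^bsub>Ctilde m\<^esub> B"
    have XX: "XX = (\<Union>a'\<in>A. \<Union>b'\<in>B. Ct_rel m `` {a' @ b'})" by (simp add: XX_def Ctilde_def)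
    have "a \<in> A" "b \<in> B" using a b self_class by auto
    moreover have "a @ b \<in> Ct_rel m `` {a @ b}" using a(1) b(1) by (intro self_class) simp
    ultimately have ab: "a @ b \<in> XX" unfolding XX by blast
    have allx: "ev n m x = ev n m a \<otimes>\<^bsub>G'\<^esub> ev n m b" if x: "x \<in> XX" for x
    proof -
      from x obtain a' b' where a': "a' \<in> A" and b': "b' \<in> B" and xr: "x \<in> Ct_rel m `` {a' @ b'}"
        unfolding XX by blast
      have "Ct_eqv m (a' @ b') x" using xr by (simp add: Ct_rel_def)
      hence "ev n m x = ev n m (a' @ b')" by (simp add: ev_eqv[OF n m])
      also have "\<dots> = ev n m a' \<otimes>\<^bsub>G'\<^esub> ev n m b'" by (rule ev_append[OF n m])
      also have "ev n m a' = ev n m a" using a' a by (simp add: class_ev)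
      also have "ev n m b' = ev n m b" using b' b by (simp add: class_ev)
      finally show ?thesis .
    qed
    have "(SOME w. w \<in> XX) \<in> XX" by (rule someI[of _ "a @ b"]) (rule ab)
    then have "hh XX = ev n m a \<otimes>\<^bsub>G'\<^esub> ev n m b"
      unfolding hh_def by (rule allx)
    then show "hh (A \<otimes>\<^bsub>Ctilde m\<^esub> B) = hh A \<otimes>\<^bsub>Gnm n m\<^esub> hh B"
      using a b by (simp add: XX_def hh_class mG)
  qed
qed

end

theorem corollary3p16:
  fixes n m :: nat
  assumes "n \<ge> 1" and "m \<ge> 2"
  shows "\<exists>h. h \<in> hom (Ctilde m) (Gnm n m)
           \<and> h ` carrier (Ctilde m) = carrier (Gnm n m)
           \<and> (\<forall>i\<le>m. h (Ct_gen m i) = yoke_perm n m i)"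
  using main[OF assms] by blast

end
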